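(* Let $r<s$ be positive integers with $r\ge 2$, and let $x$ be a non-negative integer whose $r$-canonical representation is $[x]^r=\binom{n}{r}+\binom{m}{r-1}+\binom{t}{r-2}$ (so $n>m>t$). Suppose there is an integer $w$ with $\binom{t}{r-2}=\binom{w}{r-1}$, $s-2>t$ and $s-1>w$. Then $$k_s(k_r\le x)=[x]^r_s=\binom{n}{s}+\binom{m}{s-1}.$$ Moreover, for every integer $y$ with $\binom{n}{r}+\binom{m}{r-1}\le y\le x$ we have $k_s(k_r\le y)=[y]^r_s=\binom{n}{s}+\binom{m}{s-1}$.
   Context: All graphs are finite simple graphs. For a graph $g$ and an integer $r>1$, $k_r(g)$ denotes the number of subgraphs of $g$ isomorphic to the complete graph $K_r$ (equivalently, the number of $r$-vertex cliques of $g$). For $r<s$ and a non-negative integer $x$, $k_s(k_r\le x)$ denotes the maximum of $k_s(g)$ over all graphs $g$ with $k_r(g)\le x$. The $r$-canonical representation $[x]^r$ of a non-negative integer $x$ is obtained greedily: choose $a_r$ as large as possible with $\binom{a_r}{r}\le x$, then $a_{r-1}$ as large as possible with $\binom{a_{r-1}}{r-1}\le x-\binom{a_r}{r}$, and so on, until $x=\binom{a_r}{r}+\binom{a_{r-1}}{r-1}+\dots+\binom{a_{r-j}}{r-j}$; one has $a_r>a_{r-1}>\dots>a_{r-j}$. For $r<s$, $[x]^r_s$ denotes the number obtained by replacing $r$ by $s$ in this representation: $[x]^r_s=\binom{a_r}{s}+\binom{a_{r-1}}{s-1}+\dots+\binom{a_{r-j}}{s-j}$. A binomial coefficient whose top entry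 is less than its bottom entry is taken to be $0$. *)

theory Defs
  imports Main
begin

type_synonym graph = "nat set \<times> nat set set"

definition is_graph :: "graph \<Rightarrow> bool" where
  "is_graph G \<longleftrightarrow> finite (fst G) \<and> (\<forall>e\<in>snd G. card e = 2 \<and> e \<subseteq> fst G)"

definition kcount :: "nat \<Rightarrow> graph \<Rightarrow> nat" where
  "kcount r G = card {S. S \<subseteq> fst G \<and> card S = r \<and>
      (\<forall>u\<in>S. \<forall>v\<in>S. u \<noteq> v \<longrightarrow> {u, v} \<in> snd G)}"

definition kmax :: "nat \<Rightarrow> nat \<Rightarrow> nat \<Rightarrow> nat" where
  "kmax r s x = Max {kcount s G | G. is_graph G \<and> kcount r G \<le> x}"

text \<open>Greedy r-canonical representation: list [a_r, a_{r-1}, ..., a_{r-j}].\<close>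
fun canon :: "nat \<Rightarrow> nat \<Rightarrow> nat list" where
  "canon 0 x = []"
| "canon (Suc k) x =
     (if x = 0 then []
      else (let a = (GREATEST a. a choose Suc k \<le> x)
            in a # canon k (x - (a choose Suc k))))"

text \<open>[x]^r_s: replace r by s in the r-canonical representation.\<close>
definition canon_shift :: "nat \<Rightarrow> nat \<Rightarrow> nat \<Rightarrow> nat" where
  "canon_shift r s x = (let L = canon r x in \<Sum>i<length L. (L ! i) choose (s - i))"

end

theory Submission
  imports Defs
begin


definition shadow :: "nat set set \<Rightarrow> nat set set" where
  "shadow F = {A - {x} | A x. A \<in> F \<and> x \<in> A}"

definition sh :: "nat \<Rightarrow> nat \<Rightarrow> nat set \<Rightarrow> nat set" where
  "sh i j A = (if j \<in> A \<and> i \<notin> A then insert i (A - {j}) else A)"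

definition shf :: "nat \<Rightarrow> nat \<Rightarrow> nat set set \<Rightarrow> nat set set" where
  "shf i j F = (\<lambda>A. if sh i j A \<in> F then A else sh i j A) ` F"

definition shifted :: "nat set set \<Rightarrow> bool" where
  "shifted F \<longleftrightarrow> (\<forall>A\<in>F. \<forall>i j. i < j \<longrightarrow> j \<in> A \<longrightarrow> i \<notin> A \<longrightarrow> insert i (A - {j}) \<in> F)"

lemma shf_inj: assumes "i \<noteq> j" shows "inj_on (\<lambda>A. if sh i j A \<in> F then A else sh i j A) F"
proof (rule inj_onI)
  fix A B assume A: "A \<in> F" and B: "B \<in> F" and
    e: "(if sh i j A \<in> F then A else sh i j A) = (if sh i j B \<in> F then B else sh i j B)"
  show "A = B"
  proof (cases "sh i j A \<in> F")
    case True
    show ?thesis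
    proof (cases "sh i j B \<in> F")
      case True with \<open>sh i j A \<in> F\<close> e show ?thesis by simp
    next
      case False with \<open>sh i j A \<in> F\<close> e A have "sh i j B = A" by simp
      with A False show ?thesis by simp
    qed
  next
    case False
    show ?thesis
    proof (cases "sh i j B \<in> F")
      case True with False e B have "sh i j A = B" by simp
      with B False show ?thesis by simp
    next
      case F2: False
      with False e have eq: "sh i j A = sh i j B" by simp
      from False A have "sh i j A \<noteq> A" by auto
      hence a: "j \<in> A \<and> i \<notin> A" unfolding sh_def by (auto split: if_splits)
      from F2 B have "sh i j B \<noteq> B" by auto
      hence b: "j \<in> B \<and> i \<notin> B" unfolding sh_def by (auto split: if_splits)
      from eq a b have "insert i (A - {j}) = insert i (B - {j})" unfolding sh_def by simp
      hence "insert j (insert i (A - {j}) - {i}) = insert j (insert i (B - {j}) - {i})" by simp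
      moreover have "insert j (insert i (A - {j}) - {i}) = A" using a assms by auto
      moreover have "insert j (insert i (B - {j}) - {i}) = B" using b assms by auto
      ultimately show ?thesis by simp
    qed
  qed
qed

lemma card_shf: "i \<noteq> j \<Longrightarrow> card (shf i j F) = card F"
  unfolding shf_def by (rule card_image[OF shf_inj])

lemma finite_shf: "finite F \<Longrightarrow> finite (shf i j F)"
  unfolding shf_def by simp

lemma card_sh: "card (sh i j A) = card A"
proof (cases "finite A")
  case True
  have "j \<in> A \<Longrightarrow> card A > 0" using True card_gt_0_iff by blast
  with True show ?thesis unfolding sh_def by (auto simp: card_insert_if)
next
  case False then show ?thesis unfolding sh_def by auto
qed

lemma finite_sh: "finite (sh i j A) = finite A"
  unfolding sh_def by auto

lemma mem_shf: "X \<in> shf i j G \<longleftrightarrow> (X \<in> G \<and> sh i j X \<in> G) \<or> (X \<notin> G \<and> (\<exists>C\<in>G. X = sh i j C))"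
proof
  assume "X \<in> shf i j G"
  then obtain C where C: "C \<in> G" and X: "X = (if sh i j C \<in> G then C else sh i j C)"
    unfolding shf_def by auto
  show "(X \<in> G \<and> sh i j X \<in> G) \<or> (X \<notin> G \<and> (\<exists>C\<in>G. X = sh i j C))"
    using C X by (cases "sh i j C \<in> G") auto
next
  assume "(X \<in> G \<and> sh i j X \<in> G) \<or> (X \<notin> G \<and> (\<exists>C\<in>G. X = sh i j C))"
  then show "X \<in> shf i j G"
  proof
    assume "X \<in> G \<and> sh i j X \<in> G"
    then show ?thesis unfolding shf_def by (auto intro!: image_eqI[where x=X])
  next
    assume "X \<notin> G \<and> (\<exists>C\<in>G. X = sh i j C)"
    then obtain C where "C \<in> G" "X = sh i j C" "X \<notin> G" by auto
    then show ?thesis unfolding shf_def by (auto intro!: image_eqI[where x=C])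
  qed
qed

lemma shadow_shf: assumes "i < j" shows "shadow (shf i j F) \<subseteq> shf i j (shadow F)"
proof
  fix X assume "X \<in> shadow (shf i j F)"
  then obtain A x where A: "A \<in> shf i j F" and x: "x \<in> A" and X: "X = A - {x}"
    unfolding shadow_def by auto
  from A have "(A \<in> F \<and> sh i j A \<in> F) \<or> (A \<notin> F \<and> (\<exists>C\<in>F. A = sh i j C))"
    by (simp add: mem_shf)
  then show "X \<in> shf i j (shadow F)"
  proof
    assume h: "A \<in> F \<and> sh i j A \<in> F"
    have XF: "X \<in> shadow F" using h x X unfolding shadow_def by auto
    have "sh i j X \<in> shadow F"
    proof (cases "j \<in> X \<and> i \<notin> X")
      case False then have "sh i j X = X" unfolding sh_def by auto
      with XF show ?thesis by simp
    next
      case True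
      then have jA: "j \<in> A" using X by auto
      show ?thesis
      proof (cases "i \<in> A")
        case False
        then have "sh i j A = insert i (A - {j})" using jA unfolding sh_def by auto
        moreover have "sh i j X = insert i (A - {j}) - {x}" using True X False x unfolding sh_def by auto
        moreover have "x \<in> insert i (A - {j})" using True X x by auto
        ultimately show ?thesis using h unfolding shadow_def by auto
      next
        case True2: True
        then have "x = i" using True X by auto
        then have "sh i j X = A - {j}" using True X True2 assms unfolding sh_def by auto
        then show ?thesis using h jA unfolding shadow_def by auto
      qed
    qed
    with XF show ?thesis by (simp add: mem_shf)
  next
    assume h: "A \<notin> F \<and> (\<exists>C\<in>F. A = sh i j C)"
    then obtain C where C: "C \<in> F" and AC: "A = sh i j C" by auto
    with h have act: "j \<in> C \<and> i \<notin> C" unfolding sh_def by (auto split: if_splits)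
    with AC have AC': "A = insert i (C - {j})" unfolding sh_def by auto
    show ?thesis
    proof (cases "x = i")
      case True
      then have "X = C - {j}" using AC' act X by auto
      then have XF: "X \<in> shadow F" using C act unfolding shadow_def by auto
      have "sh i j X = X" using \<open>X = C - {j}\<close> act unfolding sh_def by auto
      with XF show ?thesis by (simp add: mem_shf)
    next
      case False
      have xj: "x \<noteq> j" using x AC' act assms by auto
      have xC: "x \<in> C" using x AC' False by auto
      have CF: "C - {x} \<in> shadow F" using C xC unfolding shadow_def by auto
      have XS: "X = sh i j (C - {x})" using X AC' act xj False unfolding sh_def by auto
      show ?thesis
      proof (cases "X \<in> shadow F")
        case True
        have "i \<in> X" using X AC' False by auto
        then have "sh i j X = X" unfolding sh_def by auto
        with True show ?thesis by (simp add: mem_shf)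
      next
        case False
        with CF XS show ?thesis by (auto simp: mem_shf)
      qed
    qed
  qed
qed


lemma finite_shadow: assumes "finite F" "\<forall>A\<in>F. finite A" shows "finite (shadow F)"
proof -
  have "shadow F = (\<lambda>(A,x). A - {x}) ` (SIGMA A:F. A)" unfolding shadow_def by auto
  then show ?thesis using assms by auto
qed

lemma finite_shadow_mem: "\<forall>A\<in>F. finite A \<Longrightarrow> \<forall>B\<in>shadow F. finite B"
  unfolding shadow_def by auto

definition wt :: "nat set set \<Rightarrow> nat" where "wt F = (\<Sum>A\<in>F. \<Sum>A)"

lemma sum_sh: assumes "finite A" "j \<in> A" "i \<notin> A" shows "\<Sum>(sh i j A) + j = \<Sum>A + i"
proof -
  have "sh i j A = insert i (A - {j})" using assms unfolding sh_def by auto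
  moreover have "\<Sum>(insert i (A - {j})) = i + \<Sum>(A - {j})" using assms by (simp add: sum.insert)
  moreover have "\<Sum>(A - {j}) + j = \<Sum>A" using assms by (simp add: sum.remove)
  ultimately show ?thesis by simp
qed

lemma wt_shf:
  assumes fin: "finite F" "\<forall>A\<in>F. finite A" and ij: "i < j"
    and A: "A \<in> F" "j \<in> A" "i \<notin> A" "insert i (A - {j}) \<notin> F"
  shows "wt (shf i j F) < wt F"
proof -
  let ?p = "\<lambda>A. if sh i j A \<in> F then A else sh i j A"
  have "wt (shf i j F) = (\<Sum>B\<in>?p ` F. \<Sum>B)" unfolding wt_def shf_def by simp
  also have "\<dots> = (\<Sum>A\<in>F. \<Sum>(?p A))"
  proof -
    have "inj_on ?p F" using shf_inj[of i j F] ij by simp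
    from sum.reindex[OF this, of "\<lambda>B. \<Sum>B"] show ?thesis by (simp only: comp_def)
  qed
  also have "\<dots> < (\<Sum>A\<in>F. \<Sum>A)"
  proof (rule sum_strict_mono_ex1[OF fin(1)])
    show "\<forall>B\<in>F. \<Sum>(?p B) \<le> \<Sum>B"
    proof
      fix B assume B: "B \<in> F"
      show "\<Sum>(?p B) \<le> \<Sum>B"
      proof (cases "sh i j B \<in> F")
        case True then show ?thesis by simp
      next
        case False
        then have act: "j \<in> B" "i \<notin> B" using B unfolding sh_def by (auto split: if_splits)
        have "\<Sum>(sh i j B) + j = \<Sum>B + i" using sum_sh[OF _ act] fin B by auto
        with False ij show ?thesis by simp
      qed
    qed
    have "sh i j A = insert i (A - {j})" using A unfolding sh_def by auto
    with A have nF: "sh i j A \<notin> F" by simp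
    have "\<Sum>(sh i j A) + j = \<Sum>A + i" using sum_sh[of A j i] fin A by auto
    with nF ij have "\<Sum>(?p A) < \<Sum>A" by simp
    with A show "\<exists>B\<in>F. \<Sum>(?p B) < \<Sum>B" by blast
  qed
  finally show ?thesis unfolding wt_def .
qed

lemma exists_shifted:
  assumes "finite F" "\<forall>A\<in>F. finite A" "\<forall>A\<in>F. card A = k"
  shows "\<exists>G. shifted G \<and> finite G \<and> card G = card F \<and> card (shadow G) \<le> card (shadow F)
     \<and> (\<forall>A\<in>G. finite A) \<and> (\<forall>A\<in>G. card A = k)"
  using assms
proof (induction "wt F" arbitrary: F rule: less_induct)
  case less
  show ?case
  proof (cases "shifted F")
    case True with less.prems show ?thesis by blast
  next
    case False
    then obtain A i j where A: "A \<in> F" "i < j" "j \<in> A" "i \<notin> A" "insert i (A - {j}) \<notin> F"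
      unfolding shifted_def by blast
    let ?F = "shf i j F"
    have w: "wt ?F < wt F" using wt_shf[OF less.prems(1,2) A(2) A(1,3,4,5)] .
    have f1: "finite ?F" using finite_shf less.prems by blast
    have f2: "\<forall>B\<in>?F. finite B" using less.prems(2) unfolding shf_def by (auto simp: finite_sh)
    have f3: "\<forall>B\<in>?F. card B = k" using less.prems(3) unfolding shf_def by (auto simp: card_sh)
    have c: "card ?F = card F" using card_shf A(2) by simp
    have "card (shadow ?F) \<le> card (shf i j (shadow F))"
      using shadow_shf[OF A(2)] finite_shf[OF finite_shadow[OF less.prems(1,2)]] by (rule card_mono[rotated])
    also have "\<dots> = card (shadow F)" using card_shf A(2) by simp
    finally have c2: "card (shadow ?F) \<le> card (shadow F)" .
    from less.hyps[OF w f1 f2 f3] c c2 show ?thesis by (metis le_trans)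
  qed
qed



definition up :: "nat set set \<Rightarrow> nat set set" where
  "up F = (\<lambda>A. A - {0}) ` {A\<in>F. 0 \<in> A}"
definition dn :: "nat set set \<Rightarrow> nat set set" where
  "dn F = {A\<in>F. 0 \<notin> A}"

lemma card_up_dn: assumes "finite F" shows "card F = card (up F) + card (dn F)"
proof -
  have "inj_on (\<lambda>A. A - {0}) {A\<in>F. 0 \<in> A}"
    by (rule inj_onI) (metis (no_types, lifting) insert_Diff mem_Collect_eq)
  then have "card (up F) = card {A\<in>F. 0 \<in> A}" unfolding up_def by (rule card_image)
  moreover have "card F = card {A\<in>F. 0 \<in> A} + card (dn F)"
  proof -
    have "F = {A\<in>F. 0 \<in> A} \<union> dn F" unfolding dn_def by auto
    moreover have "{A\<in>F. 0 \<in> A} \<inter> dn F = {}" unfolding dn_def by auto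
    ultimately show ?thesis using assms by (metis card_Un_disjoint finite_Un)
  qed
  ultimately show ?thesis by simp
qed

lemma shadow_dn: assumes "shifted F" shows "shadow (dn F) \<subseteq> up F"
proof
  fix B assume "B \<in> shadow (dn F)"
  then obtain A x where A: "A \<in> F" "0 \<notin> A" "x \<in> A" "B = A - {x}" unfolding shadow_def dn_def by auto
  then have "0 < x" by (cases x) auto
  then have "insert 0 (A - {x}) \<in> F" using assms A unfolding shifted_def by blast
  moreover have "insert 0 (A - {x}) - {0} = B" using A by auto
  ultimately show "B \<in> up F" unfolding up_def by (auto intro!: image_eqI[where x="insert 0 (A - {x})"])
qed

lemma up_ne: assumes "shifted F" "A \<in> F" "A \<noteq> {}" shows "up F \<noteq> {}"
proof (cases "0 \<in> A")
  case True then show ?thesis using assms unfolding up_def by auto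
next
  case False
  obtain j where j: "j \<in> A" using assms by auto
  with False have "0 < j" by (cases j) auto
  then have "insert 0 (A - {j}) \<in> F" using assms j False unfolding shifted_def by blast
  then show ?thesis unfolding up_def by auto
qed

lemma up_card: "\<forall>A\<in>F. card A = k \<Longrightarrow> 1 \<le> k \<Longrightarrow> \<forall>B\<in>up F. card B = k - 1"
  unfolding up_def by (auto simp: card_Diff_singleton_if)

lemma finite_up: "finite F \<Longrightarrow> finite (up F)" unfolding up_def by simp

lemma shadow_up:
  assumes fin: "finite F" "\<forall>A\<in>F. finite A"
  shows "card (up F) + card (shadow (up F)) \<le> card (shadow F)"
proof -
  have fs: "finite (shadow F)" using finite_shadow[OF fin] .
  have s1: "up F \<subseteq> shadow F" unfolding up_def shadow_def by auto
  have s2: "insert 0 ` shadow (up F) \<subseteq> shadow F"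
  proof
    fix X assume "X \<in> insert 0 ` shadow (up F)"
    then obtain B x where B: "B \<in> up F" "x \<in> B" "X = insert 0 (B - {x})"
      unfolding shadow_def by auto
    then obtain A where A: "A \<in> F" "0 \<in> A" "B = A - {0}" unfolding up_def by auto
    with B have "X = A - {x}" "x \<in> A" by auto
    with A show "X \<in> shadow F" unfolding shadow_def by auto
  qed
  have d: "up F \<inter> insert 0 ` shadow (up F) = {}" unfolding up_def by auto
  have inj: "inj_on (insert 0) (shadow (up F))"
  proof (rule inj_onI)
    fix X Y assume "X \<in> shadow (up F)" "Y \<in> shadow (up F)" "insert 0 X = insert 0 Y"
    moreover have "\<forall>Z\<in>shadow (up F). 0 \<notin> Z" unfolding shadow_def up_def by auto
    ultimately show "X = Y" by (metis Diff_insert_absorb)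
  qed
  have "card (up F) + card (shadow (up F)) = card (up F) + card (insert 0 ` shadow (up F))"
    using card_image[OF inj] by simp
  also have "\<dots> = card (up F \<union> insert 0 ` shadow (up F))"
    using d fs s1 s2 by (metis card_Un_disjoint finite_subset)
  also have "\<dots> \<le> card (shadow F)" using s1 s2 fs by (intro card_mono) auto
  finally show ?thesis .
qed

lemma shadow_big:
  assumes "A \<in> G" "card A = k" "finite G" "\<forall>B\<in>G. finite B"
  shows "k \<le> card (shadow G)"
proof -
  have fA: "finite A" using assms by auto
  have "inj_on (\<lambda>x. A - {x}) A" by (rule inj_onI) auto
  then have "card ((\<lambda>x. A - {x}) ` A) = k" using assms card_image by metis
  moreover have "(\<lambda>x. A - {x}) ` A \<subseteq> shadow G" using assms unfolding shadow_def by auto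
  ultimately show ?thesis using finite_shadow[OF assms(3,4)] by (metis card_mono)
qed

definition casc :: "(nat \<Rightarrow> nat) \<Rightarrow> nat \<Rightarrow> nat \<Rightarrow> bool" where
  "casc a t k \<longleftrightarrow> 1 \<le> t \<and> (\<forall>i. t \<le> i \<and> i \<le> k \<longrightarrow> i \<le> a i) \<and> (\<forall>i. t \<le> i \<and> i < k \<longrightarrow> a i < a (Suc i))"

lemma casc_gt: assumes "casc a t k" "t < a t" "t \<le> i" "i \<le> k" shows "i < a i"
  using assms(3,4)
proof (induction i rule: dec_induct)
  case base then show ?case using assms by simp
next
  case (step i) then show ?case using assms unfolding casc_def by (metis Suc_le_eq le_trans less_imp_le_nat not_less_eq_eq)
qed



definition KKfor :: "nat \<Rightarrow> nat set set \<Rightarrow> bool" where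
  "KKfor k G \<longleftrightarrow> (\<forall>a t. casc a t k \<longrightarrow> (\<Sum>i=t..k. a i choose i) \<le> card G
      \<longrightarrow> (\<Sum>i=t..k. a i choose (i - 1)) \<le> card (shadow G))"

lemma lemS:
  assumes k: "1 \<le> k" and fin: "finite G" and u: "\<forall>A\<in>G. card A = k" and kk: "KKfor k G"
  shows "casc a t k \<Longrightarrow> t \<le> k \<Longrightarrow> (\<Sum>i=t..k. (a i - 1) choose i) + 1 \<le> card G
     \<Longrightarrow> (\<Sum>i=t..k. (a i - 1) choose (i - 1)) + (t - 1) \<le> card (shadow G)"
proof (induction "k - t" arbitrary: t rule: less_induct)
  case less
  have finm: "\<forall>A\<in>G. finite A" using u k by (metis card.infinite not_one_le_zero)
  have ct: "t \<le> a t" "1 \<le> t" using less.prems unfolding casc_def by auto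
  show ?case
  proof (cases "t < a t")
    case True
    have gt: "\<forall>i. t \<le> i \<and> i \<le> k \<longrightarrow> i < a i" using casc_gt[OF less.prems(1) True] by blast
    show ?thesis
    proof (cases "t = 1")
      case True
      let ?b = "\<lambda>i. a i - 1"
      have cb: "casc ?b t k" using less.prems(1) gt True unfolding casc_def
        by (auto simp: less_diff_conv)
      have "(\<Sum>i=t..k. ?b i choose i) \<le> card G" using less.prems(3) by simp
      with kk cb have "(\<Sum>i=t..k. ?b i choose (i - 1)) \<le> card (shadow G)" unfolding KKfor_def by blast
      with True show ?thesis by simp
    next
      case False
      with ct have t2: "2 \<le> t" by simp
      let ?b = "\<lambda>i. if i = t - 1 then t - 1 else a i - 1"
      have cb: "casc ?b (t - 1) k"
        unfolding casc_def
      proof (intro conjI allI impI)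
        show "1 \<le> t - 1" using t2 by simp
      next
        fix i assume "t - 1 \<le> i \<and> i \<le> k"
        then show "i \<le> ?b i"
        proof (cases "i = t - 1")
          case False
          with \<open>t - 1 \<le> i \<and> i \<le> k\<close> have "t \<le> i" "i \<le> k" by auto
          with gt have "i < a i" by blast
          with False show ?thesis by simp
        qed simp
      next
        fix i assume i: "t - 1 \<le> i \<and> i < k"
        show "?b i < ?b (Suc i)"
        proof (cases "i = t - 1")
          case True
          then have "Suc i = t" using t2 by simp
          then show ?thesis using True gt less.prems(2) t2 by force
        next
          case False
          then have "t \<le> i" using i ct(2) by linarith
          moreover have "Suc i \<noteq> t - 1" using False i by simp
          ultimately show ?thesis using less.prems(1) i gt unfolding casc_def
            by simp (metis Suc_leI diff_less_mono le_trans less_imp_le_nat nat_le_linear not_less_eq_eq ct(2))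
        qed
      qed
      have e: "Suc (t-1) = t" using t2 by simp
      have split1: "(\<Sum>i=t-1..k. ?b i choose i) = 1 + (\<Sum>i=t..k. (a i - 1) choose i)"
      proof -
        define f where "f = (\<lambda>i. ?b i choose i)"
        have "sum f {t-1..k} = f (t-1) + sum f {Suc (t-1)..k}"
          by (rule sum.atLeast_Suc_atMost) (use less.prems(2) in simp)
        also have "f (t-1) = 1" unfolding f_def by simp
        also have "sum f {Suc (t-1)..k} = (\<Sum>i=t..k. (a i - 1) choose i)"
          unfolding e f_def by (rule sum.cong) (use t2 in auto)
        finally show ?thesis unfolding f_def .
      qed
      have split2: "(\<Sum>i=t-1..k. ?b i choose (i - 1)) = (t - 1) + (\<Sum>i=t..k. (a i - 1) choose (i - 1))"
      proof -
        define f where "f = (\<lambda>i. ?b i choose (i - 1))"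
        have "sum f {t-1..k} = f (t-1) + sum f {Suc (t-1)..k}"
          by (rule sum.atLeast_Suc_atMost) (use less.prems(2) in simp)
        also have "f (t-1) = t - 1"
        proof -
          have "t - 1 = Suc (t - 1 - 1)" using t2 by simp
          then show ?thesis unfolding f_def by (metis binomial_Suc_n)
        qed
        also have "sum f {Suc (t-1)..k} = (\<Sum>i=t..k. (a i - 1) choose (i - 1))"
          unfolding e f_def by (rule sum.cong) (use t2 in auto)
        finally show ?thesis unfolding f_def .
      qed
      have "(\<Sum>i=t-1..k. ?b i choose i) \<le> card G" using split1 less.prems(3) by simp
      with kk cb have "(\<Sum>i=t-1..k. ?b i choose (i - 1)) \<le> card (shadow G)" unfolding KKfor_def by blast
      with split2 show ?thesis by simp
    qed
  next
    case False
    with ct have at: "a t = t" by simp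
    show ?thesis
    proof (cases "t = k")
      case True
      then have "card G \<ge> 1" using less.prems(3) by simp
      then obtain A where "A \<in> G" by (metis card.empty ex_in_conv not_one_le_zero)
      then have "k \<le> card (shadow G)" using shadow_big[of A G k] u fin finm by blast
      then show ?thesis using True at ct by simp
    next
      case False
      then have tk: "t < k" using less.prems(2) by simp
      have c1: "casc a (Suc t) k" using less.prems(1) ct unfolding casc_def by auto
      have s1: "(\<Sum>i=t..k. (a i - 1) choose i) = (\<Sum>i=Suc t..k. (a i - 1) choose i)"
        using sum.atLeast_Suc_atMost[of t k "\<lambda>i. (a i - 1) choose i"] tk at ct(2) by simp
      have s2: "(\<Sum>i=t..k. (a i - 1) choose (i - 1)) = 1 + (\<Sum>i=Suc t..k. (a i - 1) choose (i - 1))"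
        using sum.atLeast_Suc_atMost[of t k "\<lambda>i. (a i - 1) choose (i - 1)"] tk at ct(2) by simp
      have "(\<Sum>i=Suc t..k. (a i - 1) choose (i - 1)) + (Suc t - 1) \<le> card (shadow G)"
        using less.hyps[of "Suc t"] tk c1 less.prems(3) s1 by simp
      then show ?thesis using s2 ct by simp
    qed
  qed
qed



lemma sumH1:
  assumes "casc a t k"
  shows "(\<Sum>i=t..k. a i choose i) = (\<Sum>i=t..k. (a i - 1) choose i) + (\<Sum>i=t..k. (a i - 1) choose (i - 1))"
proof -
  have "(\<Sum>i=t..k. a i choose i) = (\<Sum>i=t..k. ((a i - 1) choose i) + ((a i - 1) choose (i - 1)))"
  proof (rule sum.cong)
    fix i assume "i \<in> {t..k}"
    then have "0 < i" "0 < a i" using assms unfolding casc_def by auto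
    then show "a i choose i = ((a i - 1) choose i) + ((a i - 1) choose (i - 1))"
      using choose_reduce_nat[of "a i" i] by simp
  qed simp
  then show ?thesis by (simp add: sum.distrib)
qed

lemma sumH2:
  assumes "casc a t k"
  shows "(\<Sum>i=t..k. a i choose (i - 1)) = (\<Sum>i=t..k. (a i - 1) choose (i - 1)) + (\<Sum>i=Suc (max (t-1) 1)..k. (a i - 1) choose (i - 2))"
proof -
  have t1: "1 \<le> t" using assms unfolding casc_def by auto
  have "(\<Sum>i=t..k. a i choose (i - 1)) = (\<Sum>i=t..k. ((a i - 1) choose (i - 1)) + (if 2 \<le> i then (a i - 1) choose (i - 2) else 0))"
  proof (rule sum.cong)
    fix i assume i: "i \<in> {t..k}"
    then have "0 < i" "0 < a i" using assms unfolding casc_def by auto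
    show "a i choose (i - 1) = ((a i - 1) choose (i - 1)) + (if 2 \<le> i then (a i - 1) choose (i - 2) else 0)"
    proof (cases "2 \<le> i")
      case True
      then have "0 < i - 1" by simp
      then have "a i choose (i - 1) = ((a i - 1) choose (i - 1 - 1)) + ((a i - 1) choose (i - 1))"
        using choose_reduce_nat[of "a i" "i - 1"] \<open>0 < a i\<close> by simp
      moreover have "i - 1 - 1 = i - 2" by simp
      ultimately show ?thesis using True by simp
    next
      case False
      with \<open>0 < i\<close> have "i = 1" by simp
      then show ?thesis by simp
    qed
  qed simp
  also have "\<dots> = (\<Sum>i=t..k. (a i - 1) choose (i - 1)) + (\<Sum>i=t..k. (if 2 \<le> i then (a i - 1) choose (i - 2) else 0))"
    by (simp add: sum.distrib)
  also have "(\<Sum>i=t..k. (if 2 \<le> i then (a i - 1) choose (i - 2) else 0)) = (\<Sum>i\<in>{i\<in>{t..k}. 2 \<le> i}. (a i - 1) choose (i - 2))"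
    by (rule sum.inter_filter[symmetric]) simp
  also have "{i\<in>{t..k}. 2 \<le> i} = {Suc (max (t-1) 1)..k}" using t1 by auto
  finally show ?thesis .
qed

theorem KK_all: "1 \<le> k \<Longrightarrow> finite F \<Longrightarrow> \<forall>A\<in>F. card A = k \<Longrightarrow> KKfor k F"
proof (induction k arbitrary: F rule: less_induct)
  case (less k)
  show ?case using less.prems
  proof (induction "card F" arbitrary: F rule: less_induct)
    case inner: less
    have finm: "\<forall>A\<in>F. finite A" using inner.prems by (metis card.infinite not_one_le_zero)
    show ?case unfolding KKfor_def
    proof (intro allI impI)
      fix a t assume ca: "casc a t k" and hyp: "(\<Sum>i=t..k. a i choose i) \<le> card F"
      have t1: "1 \<le> t" using ca unfolding casc_def by auto
      show "(\<Sum>i=t..k. a i choose (i - 1)) \<le> card (shadow F)"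
      proof (cases "t \<le> k")
        case False then show ?thesis by simp
      next
        case tk: True
        have akk: "k \<le> a k" using ca tk unfolding casc_def by auto
        have "1 \<le> a k choose k" using akk by (simp add: Suc_le_eq)
        also have "a k choose k \<le> (\<Sum>i=t..k. a i choose i)"
          by (rule member_le_sum) (use tk in auto)
        finally have cF: "1 \<le> card F" using hyp by simp
        then obtain A0 where A0: "A0 \<in> F" by (metis card.empty ex_in_conv not_one_le_zero)
        show ?thesis
        proof (cases "k = 1")
          case True
          with tk t1 have "t = 1" by simp
          with True have "(\<Sum>i=t..k. a i choose (i - 1)) = 1" by simp
          moreover have "1 \<le> card (shadow F)" using shadow_big[OF A0 _ inner.prems(2) finm] inner.prems(3) A0 True by auto
          ultimately show ?thesis by simp
        next
          case False
          with inner.prems have k2: "2 \<le> k" by simp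
          obtain F' where F': "shifted F'" "finite F'" "card F' = card F" "card (shadow F') \<le> card (shadow F)"
            "\<forall>A\<in>F'. finite A" "\<forall>A\<in>F'. card A = k"
            using exists_shifted[OF inner.prems(2) finm inner.prems(3)] by blast
          let ?P = "up F'" and ?Q = "dn F'"
          have "F' \<noteq> {}" using F'(2,3) cF by auto
          then obtain A where A: "A \<in> F'" by auto
          with F'(6) k2 have "A \<noteq> {}" by auto
          then have Pne: "?P \<noteq> {}" using up_ne[OF F'(1) A] by simp
          have finP: "finite ?P" using finite_up[OF F'(2)] .
          then have cP: "0 < card ?P" using Pne by auto
          have cPQ: "card F' = card ?P + card ?Q" using card_up_dn[OF F'(2)] .
          have finQ: "finite ?Q" using F'(2) unfolding dn_def by simp
          have uQ: "\<forall>B\<in>?Q. card B = k" using F'(6) unfolding dn_def by simp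
          have KKQ: "KKfor k ?Q"
            using inner.hyps[of ?Q] cPQ cP F'(3) finQ uQ inner.prems(1) by simp
          let ?S1 = "\<Sum>i=t..k. (a i - 1) choose i" and ?S2 = "\<Sum>i=t..k. (a i - 1) choose (i - 1)"
          have H1: "(\<Sum>i=t..k. a i choose i) = ?S1 + ?S2" using sumH1[OF ca] .
          have L: "?S2 \<le> card ?P"
          proof (rule ccontr)
            assume "\<not> ?S2 \<le> card ?P"
            then have "card ?P < ?S2" by simp
            then have "?S1 + 1 \<le> card ?Q" using H1 hyp cPQ F'(3) by simp
            then have "?S2 + (t - 1) \<le> card (shadow ?Q)"
              using lemS[OF inner.prems(1) finQ uQ KKQ ca tk] by simp
            also have "card (shadow ?Q) \<le> card ?P"
              using shadow_dn[OF F'(1)] finP by (rule card_mono[rotated])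
            finally show False using \<open>card ?P < ?S2\<close> by simp
          qed
          define t' where "t' = max (t - 1) 1"
          let ?b = "\<lambda>i. a (Suc i) - 1"
          have cb: "casc ?b t' (k - 1)" unfolding casc_def
          proof (intro conjI allI impI)
            show "1 \<le> t'" unfolding t'_def by simp
          next
            fix i assume i: "t' \<le> i \<and> i \<le> k - 1"
            then have "t \<le> Suc i" "Suc i \<le> k" unfolding t'_def using k2 by auto
            then have "Suc i \<le> a (Suc i)" using ca unfolding casc_def by blast
            then show "i \<le> ?b i" by simp
          next
            fix i assume i: "t' \<le> i \<and> i < k - 1"
            then have "t \<le> Suc i" "Suc i < k" unfolding t'_def using k2 by auto
            then have "a (Suc i) < a (Suc (Suc i))" "Suc i \<le> a (Suc i)" using ca unfolding casc_def by auto
            then show "?b i < ?b (Suc i)" by simp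
          qed
          have kk1: "Suc (k - 1) = k" using k2 by simp
          have re1: "(\<Sum>i=t'..k-1. ?b i choose i) = (\<Sum>i=Suc t'..k. (a i - 1) choose (i - 1))"
            using sum.shift_bounds_cl_Suc_ivl[of "\<lambda>i. (a i - 1) choose (i - 1)" t' "k - 1"] kk1 by simp
          have re2: "(\<Sum>i=t'..k-1. ?b i choose (i - 1)) = (\<Sum>i=Suc t'..k. (a i - 1) choose (i - 2))"
          proof -
            have "(\<Sum>i=Suc t'..Suc (k-1). (a i - 1) choose (i - 2)) = (\<Sum>i=t'..k-1. (a (Suc i) - 1) choose (Suc i - 2))"
              by (rule sum.shift_bounds_cl_Suc_ivl)
            also have "\<dots> = (\<Sum>i=t'..k-1. ?b i choose (i - 1))"
              by (rule sum.cong) auto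
            finally show ?thesis using kk1 by simp
          qed
          have "(\<Sum>i=Suc t'..k. (a i - 1) choose (i - 1)) \<le> ?S2"
            by (rule sum_mono2) (auto simp: t'_def)
          with re1 L have "(\<Sum>i=t'..k-1. ?b i choose i) \<le> card ?P" by simp
          moreover have "KKfor (k - 1) ?P"
            using less.IH[of "k - 1" ?P] k2 finP up_card[OF F'(6)] by simp
          ultimately have "(\<Sum>i=t'..k-1. ?b i choose (i - 1)) \<le> card (shadow ?P)"
            using cb unfolding KKfor_def by blast
          with re2 have sP: "(\<Sum>i=Suc t'..k. (a i - 1) choose (i - 2)) \<le> card (shadow ?P)" by simp
          have "(\<Sum>i=t..k. a i choose (i - 1)) = ?S2 + (\<Sum>i=Suc t'..k. (a i - 1) choose (i - 2))"
            using sumH2[OF ca] unfolding t'_def .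
          also have "\<dots> \<le> card ?P + card (shadow ?P)" using L sP by simp
          also have "\<dots> \<le> card (shadow F')" using shadow_up[OF F'(2,5)] .
          also have "\<dots> \<le> card (shadow F)" using F'(4) .
          finally show ?thesis .
        qed
      qed
    qed
  qed
qed



definition cl :: "nat \<Rightarrow> graph \<Rightarrow> nat set set" where
  "cl j G = {S. S \<subseteq> fst G \<and> card S = j \<and> (\<forall>u\<in>S. \<forall>v\<in>S. u \<noteq> v \<longrightarrow> {u, v} \<in> snd G)}"

lemma kcount_cl: "kcount j G = card (cl j G)" unfolding kcount_def cl_def by simp

lemma finite_cl: "is_graph G \<Longrightarrow> finite (cl j G)"
  unfolding is_graph_def cl_def by (rule finite_subset[of _ "Pow (fst G)"]) auto

lemma card_cl: "\<forall>A\<in>cl j G. card A = j" unfolding cl_def by auto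

lemma shadow_cl: "shadow (cl (Suc j) G) \<subseteq> cl j G"
proof
  fix B assume "B \<in> shadow (cl (Suc j) G)"
  then obtain A x where A: "A \<in> cl (Suc j) G" "x \<in> A" "B = A - {x}" unfolding shadow_def by auto
  then have "finite A" unfolding cl_def by (auto intro: card_ge_0_finite)
  then show "B \<in> cl j G" using A unfolding cl_def by auto
qed

lemma iter:
  assumes g: "is_graph G"
  shows "casc a t k \<Longrightarrow> e \<le> t \<Longrightarrow> t \<le> k \<Longrightarrow> (\<Sum>i=t..k. a i choose i) \<le> card (cl k G)
    \<Longrightarrow> (\<Sum>i=t..k. a i choose (i - e)) \<le> card (cl (k - e) G)"
proof (induction e)
  case 0 then show ?case by simp
next
  case (Suc e)
  have t1: "1 \<le> t" using Suc.prems unfolding casc_def by auto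
  have ih: "(\<Sum>i=t..k. a i choose (i - e)) \<le> card (cl (k - e) G)" using Suc by simp
  let ?a = "\<lambda>i. a (i + e)"
  have ca: "casc ?a (t - e) (k - e)" unfolding casc_def
  proof (intro conjI allI impI)
    show "1 \<le> t - e" using Suc.prems by simp
  next
    fix i assume "t - e \<le> i \<and> i \<le> k - e"
    then have "t \<le> i + e" "i + e \<le> k" using Suc.prems by auto
    then have "i + e \<le> a (i + e)" using Suc.prems(1) unfolding casc_def by blast
    then show "i \<le> ?a i" by simp
  next
    fix i assume "t - e \<le> i \<and> i < k - e"
    then have "t \<le> i + e" "i + e < k" using Suc.prems by auto
    then show "?a i < ?a (Suc i)" using Suc.prems(1) unfolding casc_def by auto
  qed
  have te: "t - e + e = t" "k - e + e = k" using Suc.prems by auto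
  have s1: "(\<Sum>i=t-e..k-e. ?a i choose i) = (\<Sum>i=t..k. a i choose (i - e))"
    using sum.shift_bounds_cl_nat_ivl[of "\<lambda>i. a i choose (i - e)" "t - e" e "k - e"] te by simp
  have s2: "(\<Sum>i=t-e..k-e. ?a i choose (i - 1)) = (\<Sum>i=t..k. a i choose (i - Suc e))"
  proof -
    have "(\<Sum>i=t-e+e..k-e+e. a i choose (i - Suc e)) = (\<Sum>i=t-e..k-e. a (i + e) choose (i + e - Suc e))"
      by (rule sum.shift_bounds_cl_nat_ivl)
    also have "\<dots> = (\<Sum>i=t-e..k-e. ?a i choose (i - 1))" by (rule sum.cong) auto
    finally show ?thesis using te by simp
  qed
  have k1: "1 \<le> k - e" using Suc.prems by simp
  have "KKfor (k - e) (cl (k - e) G)" using KK_all[OF k1 finite_cl[OF g] card_cl] .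
  then have "(\<Sum>i=t-e..k-e. ?a i choose (i - 1)) \<le> card (shadow (cl (k - e) G))"
    using ca ih s1 unfolding KKfor_def by simp
  also have "\<dots> \<le> card (cl (k - Suc e) G)"
  proof -
    have "k - e = Suc (k - Suc e)" using Suc.prems by simp
    then have "shadow (cl (k - e) G) \<subseteq> cl (k - Suc e) G" using shadow_cl by metis
    then show ?thesis using finite_cl[OF g] by (rule card_mono[rotated])
  qed
  finally show ?case using s2 by simp
qed



lemma choose_mono_top: "a \<le> b \<Longrightarrow> (a choose k) \<le> (b choose k)"
proof (induction b rule: dec_induct)
  case base then show ?case by simp
next
  case (step i) then show ?case by (cases k) auto
qed

lemma choose_ge_top: "1 \<le> k \<Longrightarrow> a \<le> (a choose k) + k"
proof (induction a)
  case 0 then show ?case by simp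
next
  case (Suc a)
  show ?case
  proof (cases "Suc a \<le> k")
    case True then show ?thesis by simp
  next
    case False
    obtain k' where k: "k = Suc k'" using Suc.prems by (cases k) auto
    have "1 \<le> a choose k'" using False k by (simp add: Suc_le_eq zero_less_binomial_iff)
    then show ?thesis using Suc k by simp
  qed
qed

lemma greedy:
  assumes "0 < z" "1 \<le> k"
  shows "((GREATEST a. a choose k \<le> z) choose k) \<le> z \<and> z < (Suc (GREATEST a. a choose k \<le> z) choose k)
     \<and> k \<le> (GREATEST a. a choose k \<le> z)"
proof -
  let ?P = "\<lambda>a. a choose k \<le> z"
  have p0: "?P 0" using assms by (cases k) auto
  have bd: "\<forall>y. ?P y \<longrightarrow> y \<le> z + k" using choose_ge_top[OF assms(2)] by (metis add_le_mono1 le_trans)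
  have g1: "?P (Greatest ?P)" by (rule GreatestI_nat[of ?P 0 "z + k"]) (use p0 bd in auto)
  have g2: "\<not> ?P (Suc (Greatest ?P))"
  proof
    assume "?P (Suc (Greatest ?P))"
    then have "Suc (Greatest ?P) \<le> Greatest ?P" by (rule Greatest_le_nat[of ?P _ "z + k"]) (use bd in auto)
    then show False by simp
  qed
  have "?P k" using assms by simp
  then have g3: "k \<le> Greatest ?P" by (rule Greatest_le_nat[of ?P _ "z + k"]) (use bd in auto)
  show ?thesis using g1 g2 g3 by simp
qed

lemma greatest_eq:
  assumes "(g choose k) \<le> z" "z < (Suc g choose k)"
  shows "(GREATEST a. a choose k \<le> z) = g"
proof (rule Greatest_equality)
  show "g choose k \<le> z" by fact
next
  fix y assume y: "y choose k \<le> z"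
  show "y \<le> g"
  proof (rule ccontr)
    assume "\<not> y \<le> g"
    then have "Suc g choose k \<le> y choose k" by (intro choose_mono_top) simp
    then show False using y assms by simp
  qed
qed

lemma canon_bound: "z < (b choose k) \<Longrightarrow> j < length (canon k z) \<Longrightarrow> canon k z ! j + j < b"
proof (induction k arbitrary: z b j)
  case 0 then show ?case by simp
next
  case (Suc k)
  then have z0: "z \<noteq> 0" by (cases "z = 0") auto
  define g where "g = (GREATEST a. a choose Suc k \<le> z)"
  have gr: "(g choose Suc k) \<le> z" "z < (Suc g choose Suc k)"
    using greedy[of z "Suc k"] z0 unfolding g_def by auto
  have cz: "canon (Suc k) z = g # canon k (z - (g choose Suc k))"
    using z0 unfolding g_def by (simp add: Let_def)
  have gb: "g < b"
  proof (rule ccontr)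
    assume "\<not> g < b"
    then have "(b choose Suc k) \<le> (g choose Suc k)" by (intro choose_mono_top) simp
    then show False using gr Suc.prems by simp
  qed
  show ?case
  proof (cases j)
    case 0 then show ?thesis using cz gb by simp
  next
    case (Suc j')
    have "z - (g choose Suc k) < (g choose k)" using gr by simp
    moreover have "j' < length (canon k (z - (g choose Suc k)))" using Suc.prems cz Suc by simp
    ultimately have "canon k (z - (g choose Suc k)) ! j' + j' < g" using Suc.IH by blast
    then show ?thesis using cz Suc gb by simp
  qed
qed



lemma sum3: "2 \<le> (k::nat) \<Longrightarrow> (\<Sum>i=k-2..k. f i) = f (k-2) + f (k-1) + (f k :: nat)"
proof -
  assume k: "2 \<le> k"
  have "{k-2..k} = insert (k-2) (insert (k-1) {k})" using k by auto
  moreover have "k - 2 \<notin> insert (k-1) {k}" "k - 1 \<notin> {k}" using k by auto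
  ultimately show ?thesis by simp
qed

lemma sum2: "1 \<le> (k::nat) \<Longrightarrow> (\<Sum>i=k-1..k. f i) = f (k-1) + (f k :: nat)"
proof -
  assume k: "1 \<le> k"
  have "{k-1..k} = insert (k-1) {k}" using k by auto
  moreover have "k - 1 \<notin> {k}" using k by auto
  ultimately show ?thesis by simp
qed

lemma UB:
  assumes g: "is_graph G" and r: "2 \<le> r" and rs: "r < s" and mn: "m < n" and ts: "t + 1 \<le> s - 2"
    and x1: "x < (Suc n choose r)"
    and x3: "x < (n choose r) + (m choose (r - 1)) + (Suc t choose (r - 2))"
    and kr: "kcount r G \<le> x"
  shows "kcount s G \<le> (n choose s) + (m choose (s - 1))"
proof (rule ccontr)
  assume "\<not> ?thesis"
  then have ks: "(n choose s) + (m choose (s - 1)) + 1 \<le> card (cl s G)" by (simp add: kcount_cl)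
  have kr': "card (cl r G) \<le> x" using kr by (simp add: kcount_cl)
  have sr: "s - (s - r) = r" using rs by simp
  have neq: "s - 2 \<noteq> s" "s - 2 \<noteq> s - 1" "s - 1 \<noteq> s" using r rs by auto
  show False
  proof (cases "s - 1 \<le> m")
    case True
    define a where "a = (\<lambda>i. if i = s then n else if i = s - 1 then m else s - 2)"
    have ca: "casc a (s - 2) s" unfolding casc_def a_def using True mn r rs by auto
    have "(\<Sum>i=s-2..s. a i choose i) = (n choose s) + (m choose (s - 1)) + 1"
      using sum3[of s "\<lambda>i. a i choose i"] r rs neq unfolding a_def by simp
    then have "(\<Sum>i=s-2..s. a i choose (i - (s - r))) \<le> card (cl (s - (s - r)) G)"
      using iter[OF g ca, of "s - r"] ks r rs by simp
    moreover have "(\<Sum>i=s-2..s. a i choose (i - (s - r))) = (n choose r) + (m choose (r - 1)) + (s - 2 choose (r - 2))"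
    proof -
      have "(\<Sum>i=s-2..s. a i choose (i - (s - r))) = (a (s-2) choose (s - 2 - (s - r))) + (a (s-1) choose (s - 1 - (s - r))) + (a s choose (s - (s - r)))"
        using sum3[of s "\<lambda>i. a i choose (i - (s - r))"] r rs by simp
      moreover have "s - 2 - (s - r) = r - 2" "s - 1 - (s - r) = r - 1" using r rs by auto
      moreover have "a (s-2) = s - 2" "a (s - 1) = m" "a s = n" unfolding a_def using r rs neq by auto
      ultimately show ?thesis using sr by simp
    qed
    moreover have "(Suc t choose (r - 2)) \<le> (s - 2 choose (r - 2))" using ts by (intro choose_mono_top) simp
    ultimately show False using kr' x3 sr by simp
  next
    case False
    then have m0: "m choose (s - 1) = 0" by simp
    show False
    proof (cases "s \<le> n")
      case True
      define a where "a = (\<lambda>i. if i = s then n else s - 1)"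
      have ca: "casc a (s - 1) s" unfolding casc_def a_def using True r rs by auto
      have "(\<Sum>i=s-1..s. a i choose i) = (n choose s) + 1"
        using sum2[of s "\<lambda>i. a i choose i"] r rs neq unfolding a_def by simp
      then have "(\<Sum>i=s-1..s. a i choose (i - (s - r))) \<le> card (cl (s - (s - r)) G)"
        using iter[OF g ca, of "s - r"] ks m0 r rs by simp
      moreover have "(\<Sum>i=s-1..s. a i choose (i - (s - r))) = (n choose r) + (s - 1 choose (r - 1))"
      proof -
        have "(\<Sum>i=s-1..s. a i choose (i - (s - r))) = (a (s-1) choose (s - 1 - (s - r))) + (a s choose (s - (s - r)))"
          using sum2[of s "\<lambda>i. a i choose (i - (s - r))"] r rs by simp
        moreover have "s - 1 - (s - r) = r - 1" using r rs by auto
        moreover have "a (s - 1) = s - 1" "a s = n" unfolding a_def using r rs neq by auto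
        ultimately show ?thesis using sr by simp
      qed
      moreover have "(s - 1 choose (r - 1)) = (s - 2 choose (r - 2)) + (s - 2 choose (r - 1))"
      proof -
        have "(s - 1 choose (r - 1)) = (s - 1 - 1 choose (r - 1 - 1)) + (s - 1 - 1 choose (r - 1))"
          using choose_reduce_nat[of "s - 1" "r - 1"] r rs by simp
        moreover have "s - 1 - 1 = s - 2" "r - 1 - 1 = r - 2" by auto
        ultimately show ?thesis by simp
      qed
      moreover have "(Suc t choose (r - 2)) \<le> (s - 2 choose (r - 2))" using ts by (intro choose_mono_top) simp
      moreover have "(m choose (r - 1)) \<le> (s - 2 choose (r - 1))" using False by (intro choose_mono_top) simp
      ultimately show False using kr' x3 sr by simp
    next
      case False
      then have n0: "n choose s = 0" by simp
      define a where "a = (\<lambda>i::nat. s)"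
      have ca: "casc a s s" unfolding casc_def a_def using rs by auto
      have "(\<Sum>i=s..s. a i choose i) = 1" unfolding a_def by simp
      then have "(\<Sum>i=s..s. a i choose (i - (s - r))) \<le> card (cl (s - (s - r)) G)"
        using iter[OF g ca, of "s - r"] ks m0 n0 rs by simp
      then have "(s choose r) \<le> x" using kr' sr unfolding a_def by simp
      moreover have "(Suc n choose r) \<le> (s choose r)" using False by (intro choose_mono_top) simp
      ultimately show False using x1 by simp
    qed
  qed
qed

definition G0 :: "nat \<Rightarrow> nat \<Rightarrow> graph" where
  "G0 n m = ({0..n}, {{u, v} | u v. u \<noteq> v \<and> u < n \<and> v < n} \<union> {{u, n} | u. u < m})"

lemma G0_edge: "e \<in> snd (G0 n m) \<longleftrightarrow> (\<exists>u v. e = {u, v} \<and> u \<noteq> v \<and> u < n \<and> v < n) \<or> (\<exists>u. e = {u, n} \<and> u < m)"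
  unfolding G0_def by auto

lemma G0_fst: "fst (G0 n m) = {0..n}" unfolding G0_def by simp

lemma G0_edge_n: assumes "m < n" "u \<noteq> n" "{u, n} \<in> snd (G0 n m)" shows "u < m"
proof -
  from assms(3) have "(\<exists>a b. {u, n} = {a, b} \<and> a \<noteq> b \<and> a < n \<and> b < n) \<or> (\<exists>a. {u, n} = {a, n} \<and> a < m)"
    by (simp only: G0_edge)
  then show ?thesis
  proof
    assume "\<exists>a b. {u, n} = {a, b} \<and> a \<noteq> b \<and> a < n \<and> b < n"
    then obtain a b where "{u, n} = {a, b}" "a < n" "b < n" by blast
    then have "n \<in> {a, b}" by blast
    with \<open>a < n\<close> \<open>b < n\<close> show ?thesis by auto
  next
    assume "\<exists>a. {u, n} = {a, n} \<and> a < m"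
    then obtain a where "{u, n} = {a, n}" "a < m" by blast
    then have "u \<in> {a, n}" by blast
    with assms(2) \<open>a < m\<close> show ?thesis by auto
  qed
qed

lemma G0_edge_lt: "u \<noteq> v \<Longrightarrow> u < n \<Longrightarrow> v < n \<Longrightarrow> {u, v} \<in> snd (G0 n m)"
  by (simp only: G0_edge) blast

lemma G0_edge_m: "u < m \<Longrightarrow> {u, n} \<in> snd (G0 n m)"
  by (simp only: G0_edge) blast

lemma G0_graph: assumes mn: "m < n" shows "is_graph (G0 n m)"
proof -
  have "\<forall>e\<in>snd (G0 n m). card e = 2 \<and> e \<subseteq> {0..n}"
  proof
    fix e assume "e \<in> snd (G0 n m)"
    then have "(\<exists>u v. e = {u, v} \<and> u \<noteq> v \<and> u < n \<and> v < n) \<or> (\<exists>u. e = {u, n} \<and> u < m)"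
      by (simp only: G0_edge)
    then show "card e = 2 \<and> e \<subseteq> {0..n}"
    proof
      assume "\<exists>u v. e = {u, v} \<and> u \<noteq> v \<and> u < n \<and> v < n"
      then obtain u v where "e = {u, v}" "u \<noteq> v" "u < n" "v < n" by blast
      then show ?thesis by auto
    next
      assume "\<exists>u. e = {u, n} \<and> u < m"
      then obtain u where "e = {u, n}" "u < m" by blast
      then show ?thesis using mn by auto
    qed
  qed
  then show ?thesis unfolding is_graph_def G0_fst by simp
qed

lemma G0_cl:
  assumes mn: "m < n" and j: "1 \<le> j"
  shows "cl j (G0 n m) = {S. S \<subseteq> {0..<n} \<and> card S = j} \<union> insert n ` {T. T \<subseteq> {0..<m} \<and> card T = j - 1}"
proof (intro equalityI subsetI)
  fix S assume S: "S \<in> cl j (G0 n m)"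
  then have S': "S \<subseteq> {0..n} \<and> card S = j \<and> (\<forall>u\<in>S. \<forall>v\<in>S. u \<noteq> v \<longrightarrow> {u, v} \<in> snd (G0 n m))"
    unfolding cl_def G0_fst by blast
  then have SV: "S \<subseteq> {0..n}" "card S = j" and E: "\<forall>u\<in>S. \<forall>v\<in>S. u \<noteq> v \<longrightarrow> {u, v} \<in> snd (G0 n m)"
    by blast+
  show "S \<in> {S. S \<subseteq> {0..<n} \<and> card S = j} \<union> insert n ` {T. T \<subseteq> {0..<m} \<and> card T = j - 1}"
  proof (cases "n \<in> S")
    case False
    have "S \<subseteq> {0..<n}"
    proof
      fix u assume "u \<in> S"
      then have "u \<le> n" "u \<noteq> n" using SV False by auto
      then show "u \<in> {0..<n}" by simp
    qed
    then show ?thesis using SV by blast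
  next
    case True
    have T: "S - {n} \<subseteq> {0..<m}"
    proof
      fix u assume u: "u \<in> S - {n}"
      then have "u \<in> S" "u \<noteq> n" by auto
      then have "{u, n} \<in> snd (G0 n m)" using E True by blast
      then have "u < m" using G0_edge_n[OF mn] u by blast
      then show "u \<in> {0..<m}" by simp
    qed
    have fS: "finite S" using SV finite_subset by blast
    have "card (S - {n}) = j - 1" using SV True fS by simp
    moreover have "S = insert n (S - {n})" using True by auto
    ultimately show ?thesis using T by blast
  qed
next
  fix S assume S: "S \<in> {S. S \<subseteq> {0..<n} \<and> card S = j} \<union> insert n ` {T. T \<subseteq> {0..<m} \<and> card T = j - 1}"
  then show "S \<in> cl j (G0 n m)"
  proof
    assume S1: "S \<in> {S. S \<subseteq> {0..<n} \<and> card S = j}"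
    have "\<forall>u\<in>S. \<forall>v\<in>S. u \<noteq> v \<longrightarrow> {u, v} \<in> snd (G0 n m)"
    proof (intro ballI impI)
      fix u v assume uv: "u \<in> S" "v \<in> S" "u \<noteq> v"
      then have "u < n" "v < n" using S1 by auto
      then show "{u, v} \<in> snd (G0 n m)" using uv(3) by (intro G0_edge_lt)
    qed
    moreover have "S \<subseteq> {0..n}" using S1 by auto
    ultimately show ?thesis using S1 unfolding cl_def G0_fst by simp
  next
    assume "S \<in> insert n ` {T. T \<subseteq> {0..<m} \<and> card T = j - 1}"
    then obtain T where T: "T \<subseteq> {0..<m}" "card T = j - 1" "S = insert n T" by auto
    have fT: "finite T" using T finite_subset by blast
    have nT: "n \<notin> T" using T mn by auto
    have "card S = j" using T fT nT j by simp
    moreover have "S \<subseteq> {0..n}" using T mn by auto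
    moreover have "\<forall>u\<in>S. \<forall>v\<in>S. u \<noteq> v \<longrightarrow> {u, v} \<in> snd (G0 n m)"
    proof (intro ballI impI)
      fix u v assume uv: "u \<in> S" "v \<in> S" "u \<noteq> v"
      show "{u, v} \<in> snd (G0 n m)"
      proof (cases "u = n")
        case True
        then have "v < m" using uv T by auto
        then have "{v, n} \<in> snd (G0 n m)" by (rule G0_edge_m)
        then show ?thesis using True by (simp add: insert_commute)
      next
        case False
        then have u: "u < m" using uv T by auto
        show ?thesis
        proof (cases "v = n")
          case True then show ?thesis using u G0_edge_m by simp
        next
          case False
          then have "v < m" using uv T by auto
          then show ?thesis using u uv mn G0_edge_lt by simp
        qed
      qed
    qed
    ultimately show ?thesis unfolding cl_def G0_fst by simp
  qed
qed

lemma G0_count: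
  assumes mn: "m < n" and j: "1 \<le> j"
  shows "kcount j (G0 n m) = (n choose j) + (m choose (j - 1))"
proof -
  have d: "{S. S \<subseteq> {0..<n} \<and> card S = j} \<inter> insert n ` {T. T \<subseteq> {0..<m} \<and> card T = j - 1} = {}" by auto
  have inj: "inj_on (insert n) {T. T \<subseteq> {0..<m} \<and> card T = j - 1}"
  proof (rule inj_onI)
    fix X Y assume "X \<in> {T. T \<subseteq> {0..<m} \<and> card T = j - 1}" "Y \<in> {T. T \<subseteq> {0..<m} \<and> card T = j - 1}" "insert n X = insert n Y"
    then show "X = Y" using mn by (metis Diff_insert_absorb atLeastLessThan_iff mem_Collect_eq not_less_iff_gr_or_eq subsetD)
  qed
  have f1: "finite {S. S \<subseteq> {0..<n} \<and> card S = j}" by simp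
  have f2: "finite (insert n ` {T. T \<subseteq> {0..<m} \<and> card T = j - 1})" by simp
  have "kcount j (G0 n m) = card {S. S \<subseteq> {0..<n} \<and> card S = j} + card (insert n ` {T. T \<subseteq> {0..<m} \<and> card T = j - 1})"
    unfolding kcount_cl G0_cl[OF mn j] using card_Un_disjoint[OF f1 f2 d] .
  also have "\<dots> = (n choose j) + (m choose (j - 1))"
    using n_subsets[of "{0..<n}" j] n_subsets[of "{0..<m}" "j - 1"] card_image[OF inj] by simp
  finally show ?thesis .
qed



lemma kmax_eq:
  assumes r: "2 \<le> r" and rs: "r < s" and mn: "m < n" and ts: "t + 1 \<le> s - 2"
    and x1: "x < (Suc n choose r)"
    and x3: "x < (n choose r) + (m choose (r - 1)) + (Suc t choose (r - 2))"
    and y: "(n choose r) + (m choose (r - 1)) \<le> y" "y \<le> x"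
  shows "kmax r s y = (n choose s) + (m choose (s - 1))"
proof -
  let ?V = "(n choose s) + (m choose (s - 1))"
  let ?A = "{kcount s G | G. is_graph G \<and> kcount r G \<le> y}"
  have sub: "?A \<subseteq> {..?V}"
  proof
    fix v assume "v \<in> ?A"
    then obtain G where G: "v = kcount s G" "is_graph G" "kcount r G \<le> y" by auto
    then have "kcount s G \<le> ?V" using UB[OF G(2) r rs mn ts x1 x3] y by simp
    then show "v \<in> {..?V}" using G by simp
  qed
  have "is_graph (G0 n m)" using G0_graph[OF mn] .
  moreover have "kcount r (G0 n m) \<le> y" using G0_count[OF mn, of r] r y by simp
  moreover have "kcount s (G0 n m) = ?V" using G0_count[OF mn, of s] rs by simp
  ultimately have "\<exists>G. ?V = kcount s G \<and> is_graph G \<and> kcount r G \<le> y" by metis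
  then have "?V \<in> ?A" by blast
  moreover have fin: "finite ?A" using sub finite_subset by blast
  ultimately show ?thesis unfolding kmax_def using sub by (intro Max_eqI) auto
qed

theorem theorem3:
  fixes r s x n m t w :: nat
  assumes "2 \<le> r" and "r < s"
    and "canon r x = [n, m, t]"
    and "t choose (r - 2) = w choose (r - 1)"
    and "s - 2 > t" and "s - 1 > w"
  shows "kmax r s x = canon_shift r s x
         \<and> canon_shift r s x = (n choose s) + (m choose (s - 1))
         \<and> (\<forall>y::nat. (n choose r) + (m choose (r - 1)) \<le> y \<and> y \<le> x \<longrightarrow>
              kmax r s y = canon_shift r s y
              \<and> canon_shift r s y = (n choose s) + (m choose (s - 1)))"
proof -
  obtain r1 where r1: "r = Suc r1" using assms(1) by (cases r) auto
  define x1 where "x1 = x - (n choose r)"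
  define x2 where "x2 = x1 - (m choose r1)"
  have c: "canon (Suc r1) x = [n, m, t]" using assms(3) r1 by simp
  have x0: "x \<noteq> 0" using c by (cases "x = 0") auto
  have nG: "n = (GREATEST a. a choose r \<le> x)" and c1: "canon r1 x1 = [m, t]"
    using c x0 r1 unfolding x1_def by (auto simp: Let_def)
  obtain r2 where r2: "r1 = Suc r2" using c1 by (cases r1) auto
  have x10: "x1 \<noteq> 0" using c1 r2 by (cases "x1 = 0") auto
  have mG: "m = (GREATEST a. a choose r1 \<le> x1)" and c2: "canon r2 x2 = [t]"
    using c1 x10 r2 unfolding x2_def by (auto simp: Let_def)
  obtain r3 where r3: "r2 = Suc r3" using c2 by (cases r2) auto
  have x20: "x2 \<noteq> 0" using c2 r3 by (cases "x2 = 0") auto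
  have tG: "t = (GREATEST a. a choose r2 \<le> x2)" using c2 x20 r3 by (auto simp: Let_def)
  have gn: "(n choose r) \<le> x" "x < (Suc n choose r)" "r \<le> n" using greedy[of x r] x0 nG assms(1) by auto
  have gm: "(m choose r1) \<le> x1" "x1 < (Suc m choose r1)" "r1 \<le> m" using greedy[of x1 r1] x10 mG r2 by auto
  have gt: "(t choose r2) \<le> x2" "x2 < (Suc t choose r2)" using greedy[of x2 r2] x20 tG r3 by auto
  have rr: "r - 1 = r1" "r - 2 = r2" using r1 r2 by auto
  have x3: "x < (n choose r) + (m choose (r - 1)) + (Suc t choose (r - 2))"
  proof -
    have e1: "x = (n choose r) + x1" using gn unfolding x1_def by simp
    have e2: "x1 = (m choose r1) + x2" using gm unfolding x2_def by simp
    show ?thesis using e1 e2 gt rr by simp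
  qed
  have mn: "m < n"
  proof (rule ccontr)
    assume "\<not> m < n"
    then have "(n choose r1) \<le> (m choose r1)" by (intro choose_mono_top) simp
    moreover have "x1 < (n choose r1)" using gn r1 unfolding x1_def by simp
    ultimately show False using gm by simp
  qed
  have ts: "t + 1 \<le> s - 2" using assms(5) by simp
  have m1: "1 \<le> (m choose r1)" using gm(3) by (simp add: Suc_le_eq)
  let ?V = "(n choose s) + (m choose (s - 1))"
  have csx: "canon_shift r s x = ?V"
  proof -
    have "canon_shift r s x = (n choose s) + (m choose (s - 1)) + (t choose (s - 2))"
      unfolding canon_shift_def using assms(3) by (simp add: Let_def numeral_eq_Suc)
    moreover have "t choose (s - 2) = 0" using assms(5) by simp
    ultimately show ?thesis by simp
  qed
  have ally: "kmax r s y = canon_shift r s y \<and> canon_shift r s y = ?V"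
    if y: "(n choose r) + (m choose (r - 1)) \<le> y" "y \<le> x" for y
  proof -
    have km: "kmax r s y = ?V" using kmax_eq[OF assms(1,2) mn ts gn(2) x3 y] .
    define y1 where "y1 = y - (n choose r)"
    define y2 where "y2 = y1 - (m choose r1)"
    have y0: "y \<noteq> 0" using y m1 rr by auto
    have nG': "(GREATEST a. a choose r \<le> y) = n"
      by (rule greatest_eq) (use y gn in auto)
    have y10: "y1 \<noteq> 0" using y m1 rr unfolding y1_def by auto
    have mG': "(GREATEST a. a choose r1 \<le> y1) = m"
      by (rule greatest_eq) (use y gm rr in \<open>auto simp: y1_def x1_def\<close>)
    have cy: "canon r y = n # m # canon r2 y2"
      using y0 y10 nG' mG' r1 r2 unfolding y1_def y2_def by (simp add: Let_def)
    have y2b: "y2 < (Suc t choose r2)"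
      using gt y rr unfolding y2_def y1_def x2_def x1_def by linarith
    define L where "L = canon r2 y2"
    have Lb: "\<forall>j < length L. L ! j + j < Suc t" using canon_bound[OF y2b] unfolding L_def by blast
    have "canon_shift r s y = (\<Sum>i<length (n # m # L). (n # m # L) ! i choose (s - i))"
      unfolding canon_shift_def cy L_def by (simp add: Let_def)
    also have "\<dots> = (n choose s) + ((m choose (s - 1)) + (\<Sum>i<length L. L ! i choose (s - Suc (Suc i))))"
      by (simp only: length_Cons sum.lessThan_Suc_shift nth_Cons_0 nth_Cons_Suc diff_zero One_nat_def)
    also have "(\<Sum>i<length L. L ! i choose (s - Suc (Suc i))) = 0"
    proof (rule sum.neutral, rule ballI)
      fix j assume "j \<in> {..<length L}"
      then have "L ! j + j < Suc t" using Lb by simp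
      then have "L ! j < s - Suc (Suc j)" using ts by simp
      then show "L ! j choose (s - Suc (Suc j)) = 0" by simp
    qed
    finally show ?thesis using km by simp
  qed
  have xx0: "(m choose r1) + (n choose r) \<le> x" using gm(1) gn(1) unfolding x1_def by (simp add: le_diff_conv2)
  have xx: "(n choose r) + (m choose (r - 1)) \<le> x" using xx0 rr by simp
  show ?thesis using ally[OF xx order.refl] ally csx by simp
qed

end
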